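(* Let $x=(x_1|x_2|x_3)$, $y=(y_1|y_2|y_3)$, $z=(z_1|z_2|z_3)$ be pairwise orthogonal (over $\mathbb{F}_2$) binary vectors of length 24, each split into three blocks of length 8, such that every block $x_i,y_i,z_i$ ($i=1,2,3$) has weight 4 (so each of $x,y,z$ has weight 12). Suppose that for each $i=1,2,3$ the images $\psi(x_i),\psi(y_i),\psi(z_i)$ are linearly independent in the quotient space $\mathbb{F}_2^8/\langle \mathbf{0},\mathbf{1}\rangle$, and that $$\mathrm{wt}(x_i+y_i)=\mathrm{wt}(x_i+z_i)=\mathrm{wt}(y_i+z_i)=4\quad (i=1,2,3).$$ Then: (a) $|\mathcal{L}(x)|=|\mathcal{L}(y)|=|\mathcal{L}(z)|=576^4$; (b) $|\mathcal{L}(x,y)|=16^4$, and moreover $\mathcal{L}(x,y)=\mathcal{L}(x,x+y)=\mathcal{L}(x+y,y)$; (c) $|\mathcal{L}(x,y,z)|=1$.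
   Context: A Latin square of order 8 on the symbols $\{0,1,\dots,7\}$ is an $8\times 8$ array $(a_{i,j})_{i,j=0}^{7}$ in which every symbol occurs exactly once in each row and each column; it is identified with the code $L=\{(i,j,a_{i,j}):0\le i,j\le 7\}\subseteq\{0,\dots,7\}^3$ of 64 words. Let $\mathcal{L}$ be the set of all such codes $L$ (all Latin squares of order 8). Let $\varphi(s)\in\mathbb{F}_2^8$ denote the unit vector with a 1 in position $s$ (positions indexed $0,\dots,7$), and for $L\in\mathcal{L}$ let $C(L)=\{(\varphi(i)\,|\,\varphi(j)\,|\,\varphi(a_{i,j})):(i,j,a_{i,j})\in L\}\subseteq\mathbb{F}_2^{24}$. For $x\in\mathbb{F}_2^{24}$, $\mathcal{L}(x)$ is the set of all $L\in\mathcal{L}$ such that every word of $C(L)$ is orthogonal to $x$ over $\mathbb{F}_2$; $\mathcal{L}(x,y)=\mathcal{L}(x)\cap\mathcal{L}(y)$ and $\mathcal{L}(x,y,z)=\mathcal{L}(x)\cap\mathcal{L}(y)\cap\mathcal{L}(z)$. $\mathbf{0},\mathbf{1}$ denote the all-zero and all-one vectors of length 8, and $\psi:\mathbb{F}_2^8\to\mathbb{F}_2^8/\langle\mathbf{0},\mathbf{1}\rangle$ is the quotient map. $\mathrm{wt}$ denotes Hamming weight. *)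

theory Defs
  imports Main
begin

text \<open>Binary vectors are modelled as functions nat => bool (True = 1 in F_2);
  a vector of length n is one that vanishes at positions >= n.
  Addition over F_2 is pointwise exclusive or.\<close>

type_synonym bvec = "nat \<Rightarrow> bool"

definition vadd :: "bvec \<Rightarrow> bvec \<Rightarrow> bvec" where
  "vadd u v = (\<lambda>k. u k \<noteq> v k)"

definition wt :: "nat \<Rightarrow> bvec \<Rightarrow> nat" where
  "wt n u = card {k. k < n \<and> u k}"

definition orth :: "nat \<Rightarrow> bvec \<Rightarrow> bvec \<Rightarrow> bool" where
  "orth n u v \<longleftrightarrow> even (card {k. k < n \<and> u k \<and> v k})"

text \<open>Block i (i = 0,1,2) of a length-24 vector x = (x_1|x_2|x_3), a vector of length 8.\<close>
definition block :: "bvec \<Rightarrow> nat \<Rightarrow> bvec" where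
  "block x i = (\<lambda>p. p < 8 \<and> x (8 * i + p))"

definition phi :: "nat \<Rightarrow> bvec" where
  "phi s = (\<lambda>p. p < 8 \<and> p = s)"

definition concat3 :: "bvec \<Rightarrow> bvec \<Rightarrow> bvec \<Rightarrow> bvec" where
  "concat3 u v w = (\<lambda>k. if k < 8 then u k else if k < 16 then v (k - 8)
                         else if k < 24 then w (k - 16) else False)"

text \<open>The set of all Latin squares of order 8, identified with their codes.\<close>
definition latin_codes :: "(nat \<times> nat \<times> nat) set set" where
  "latin_codes = {L. \<exists>a :: nat \<Rightarrow> nat \<Rightarrow> nat.
      (\<forall>i<8. \<forall>j<8. a i j < 8) \<and>
      (\<forall>i<8. inj_on (\<lambda>j. a i j) {0..<8}) \<and>
      (\<forall>j<8. inj_on (\<lambda>i. a i j) {0..<8}) \<and>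
      L = {(i, j, a i j) | i j. i < 8 \<and> j < 8}}"

definition Ccode :: "(nat \<times> nat \<times> nat) set \<Rightarrow> bvec set" where
  "Ccode L = (\<lambda>(i, j, s). concat3 (phi i) (phi j) (phi s)) ` L"

definition LS :: "bvec \<Rightarrow> (nat \<times> nat \<times> nat) set set" where
  "LS x = {L \<in> latin_codes. \<forall>c \<in> Ccode L. orth 24 c x}"

definition LS2 :: "bvec \<Rightarrow> bvec \<Rightarrow> (nat \<times> nat \<times> nat) set set" where
  "LS2 x y = LS x \<inter> LS y"

definition LS3 :: "bvec \<Rightarrow> bvec \<Rightarrow> bvec \<Rightarrow> (nat \<times> nat \<times> nat) set set" where
  "LS3 x y z = LS x \<inter> LS y \<inter> LS z"

text \<open>psi(u), psi(v), psi(w) linearly independent in F_2^8 / <0,1>: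
  no nontrivial F_2-linear combination a u + b v + c w lies in {0, 1}
  (as vectors of length 8).\<close>
definition psi_indep3 :: "bvec \<Rightarrow> bvec \<Rightarrow> bvec \<Rightarrow> bool" where
  "psi_indep3 u v w \<longleftrightarrow>
     (\<forall>a b c :: bool. (a \<or> b \<or> c) \<longrightarrow>
        (let s = (\<lambda>p. (a \<and> u p) \<noteq> ((b \<and> v p) \<noteq> (c \<and> w p))) in
          \<not> (\<forall>p<8. \<not> s p) \<and> \<not> (\<forall>p<8. s p)))"

end

theory Submission
  imports Defs "HOL-Library.FuncSet"
begin

definition Lat :: "nat set \<Rightarrow> nat set \<Rightarrow> nat set \<Rightarrow> (nat \<times> nat \<Rightarrow> nat) set" where
 "Lat R C S = {f. f \<in> extensional (R \<times> C) \<and> (\<forall>i\<in>R. bij_betw (\<lambda>j. f (i, j)) C S)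
     \<and> (\<forall>j\<in>C. bij_betw (\<lambda>i. f (i, j)) R S)}"

lemma bij_by_card:
  assumes "finite B" "inj_on f A" "f ` A \<subseteq> B" "card A = card B"
  shows "bij_betw f A B"
proof -
  have "card (f ` A) = card B" using assms card_image by metis
  then have "f ` A = B" using assms card_subset_eq by metis
  then show ?thesis using assms bij_betw_def by blast
qed

lemma Lat_sub: "Lat R C S \<subseteq> Pi\<^sub>E (R \<times> C) (\<lambda>_. S)"
  unfolding Lat_def PiE_def by (auto simp: bij_betw_def)

lemma Lat_finite: "finite R \<Longrightarrow> finite C \<Longrightarrow> finite S \<Longrightarrow> finite (Lat R C S)"
  by (rule finite_subset[OF Lat_sub]) (auto intro: finite_PiE)

lemma Lat_transport:
  assumes fin: "finite R'" "finite C'" "finite S'"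
    and r: "bij_betw r R' R" and c: "bij_betw c C' C" and s: "bij_betw s S S'"
  shows "card (Lat R C S) \<le> card (Lat R' C' S')"
proof -
  define T where "T f = restrict (\<lambda>(i, j). s (f (r i, c j))) (R' \<times> C')" for f
  have "inj_on T (Lat R C S)"
  proof
    fix f g assume f: "f \<in> Lat R C S" and g: "g \<in> Lat R C S" and e: "T f = T g"
    show "f = g"
    proof (rule extensionalityI)
      show "f \<in> extensional (R \<times> C)" "g \<in> extensional (R \<times> C)" using f g by (auto simp: Lat_def)
      fix p assume p: "p \<in> R \<times> C"
      then obtain i j where ij: "p = (i, j)" "i \<in> R" "j \<in> C" by auto
      obtain i' where i': "i' \<in> R'" "r i' = i" using r ij by (auto simp: bij_betw_def)
      obtain j' where j': "j' \<in> C'" "c j' = j" using c ij by (auto simp: bij_betw_def)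
      have "T f (i', j') = T g (i', j')" using e by simp
      then have "s (f (i, j)) = s (g (i, j))" using i' j' by (simp add: T_def)
      moreover have "f (i, j) \<in> S" "g (i, j) \<in> S" using f g ij by (auto simp: Lat_def bij_betw_def)
      ultimately show "f p = g p" using s ij by (auto simp: bij_betw_def inj_on_def)
    qed
  qed
  moreover have "T ` Lat R C S \<subseteq> Lat R' C' S'"
  proof
    fix h assume "h \<in> T ` Lat R C S"
    then obtain f where f: "f \<in> Lat R C S" and h: "h = T f" by auto
    have "\<forall>i\<in>R'. bij_betw (\<lambda>j. h (i, j)) C' S'"
    proof
      fix i assume i: "i \<in> R'"
      have "r i \<in> R" using r i by (auto simp: bij_betw_def)
      then have "bij_betw (\<lambda>j. f (r i, j)) C S" using f by (auto simp: Lat_def)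
      then have "bij_betw (s \<circ> (\<lambda>j. f (r i, j)) \<circ> c) C' S'"
        using c s by (metis bij_betw_trans)
      then show "bij_betw (\<lambda>j. h (i, j)) C' S'"
        by (rule bij_betw_cong[THEN iffD1, rotated]) (auto simp: h T_def i)
    qed
    moreover have "\<forall>j\<in>C'. bij_betw (\<lambda>i. h (i, j)) R' S'"
    proof
      fix j assume j: "j \<in> C'"
      have "c j \<in> C" using c j by (auto simp: bij_betw_def)
      then have "bij_betw (\<lambda>i. f (i, c j)) R S" using f by (auto simp: Lat_def)
      then have "bij_betw (s \<circ> (\<lambda>i. f (i, c j)) \<circ> r) R' S'"
        using r s by (metis bij_betw_trans)
      then show "bij_betw (\<lambda>i. h (i, j)) R' S'"
        by (rule bij_betw_cong[THEN iffD1, rotated]) (auto simp: h T_def j)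
    qed
    ultimately show "h \<in> Lat R' C' S'" by (auto simp: Lat_def h T_def)
  qed
  ultimately show ?thesis using card_inj_on_le Lat_finite fin by metis
qed

lemma Lat_card_eq:
  assumes "finite R" "finite C" "finite S" "card R = n" "card C = n" "card S = n"
  shows "card (Lat R C S) = card (Lat {..<n} {..<n} {..<n})"
proof -
  obtain hR where hR: "bij_betw hR {0..<n} R" using ex_bij_betw_nat_finite assms by metis
  obtain hC where hC: "bij_betw hC {0..<n} C" using ex_bij_betw_nat_finite assms by metis
  obtain hS where hS: "bij_betw hS {0..<n} S" using ex_bij_betw_nat_finite assms by metis
  have e: "{0..<n} = {..<n}" by auto
  note hR' = hR[unfolded e] and hC' = hC[unfolded e] and hS' = hS[unfolded e]
  show ?thesis
  proof (rule antisym)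
    show "card (Lat R C S) \<le> card (Lat {..<n} {..<n} {..<n})"
      by (rule Lat_transport[OF _ _ _ hR' hC' bij_betw_the_inv_into[OF hS']]) auto
    show "card (Lat {..<n} {..<n} {..<n}) \<le> card (Lat R C S)"
      by (rule Lat_transport[OF assms(1-3) bij_betw_the_inv_into[OF hR'] bij_betw_the_inv_into[OF hC'] hS'])
  qed
qed

definition P :: "nat \<Rightarrow> nat list list" where
 "P n = filter distinct (List.n_lists n [0..<n])"

fun gen :: "nat \<Rightarrow> nat \<Rightarrow> nat list list list" where
 "gen n 0 = [[]]"
| "gen n (Suc k) = concat (map (\<lambda>xss. map (\<lambda>r. r # xss)
     (filter (\<lambda>r. \<forall>xs\<in>set xss. list_all2 (\<noteq>) r xs) (P n))) (gen n k))"

fun goodL :: "nat \<Rightarrow> nat list list \<Rightarrow> bool" where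
  "goodL n [] = True"
| "goodL n (r # xss) = (r \<in> set (P n) \<and> (\<forall>xs\<in>set xss. list_all2 (\<noteq>) r xs) \<and> goodL n xss)"

lemma distinct_concat_map_disj:
  "distinct xs \<Longrightarrow> (\<forall>x. distinct (f x)) \<Longrightarrow> (\<forall>x y. x \<noteq> y \<longrightarrow> set (f x) \<inter> set (f y) = {})
   \<Longrightarrow> distinct (concat (map f xs))"
proof (induction xs)
  case Nil
  then show ?case by simp
next
  case (Cons a xs)
  have d: "set (f a) \<inter> set (f b) = {}" if "b \<in> set xs" for b
    using Cons.prems that by (metis distinct.simps(2))
  have "set (f a) \<inter> set (concat (map f xs)) = {}"
    using d by auto
  then show ?case using Cons by simp
qed

lemma distinct_n_lists: "distinct xs \<Longrightarrow> distinct (List.n_lists n xs)"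
proof (induction n)
  case 0
  then show ?case by simp
next
  case (Suc n)
  show ?case unfolding List.n_lists.simps
    by (rule distinct_concat_map_disj) (use Suc in \<open>auto simp: distinct_map inj_on_def\<close>)
qed

lemma gen_props: "set (gen n k) = {xss. length xss = k \<and> goodL n xss} \<and> distinct (gen n k)"
proof (induction k)
  case 0
  then show ?case by (auto simp: length_Suc_conv)
next
  case (Suc k)
  have "set (gen n (Suc k)) = {xss. length xss = Suc k \<and> goodL n xss}"
    using Suc by (auto simp: length_Suc_conv)
  moreover have "distinct (gen n (Suc k))"
    unfolding gen.simps
  proof (rule distinct_concat_map_disj)
    show "distinct (gen n k)" using Suc by simp
    have dP: "distinct (P n)" unfolding P_def
      by (intro distinct_filter distinct_n_lists) simp
    show "\<forall>x. distinct (map (\<lambda>r. r # x) (filter (\<lambda>r. \<forall>xs\<in>set x. list_all2 (\<noteq>) r xs) (P n)))"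
      using dP by (simp add: distinct_map inj_on_def)
    show "\<forall>x y. x \<noteq> y \<longrightarrow> set (map (\<lambda>r. r # x) (filter (\<lambda>r. \<forall>xs\<in>set x. list_all2 (\<noteq>) r xs) (P n))) \<inter>
        set (map (\<lambda>r. r # y) (filter (\<lambda>r. \<forall>xs\<in>set y. list_all2 (\<noteq>) r xs) (P n))) = {}"
      by auto
  qed
  ultimately show ?case by simp
qed

lemma P_iff: "r \<in> set (P n) \<longleftrightarrow> length r = n \<and> distinct r \<and> set r \<subseteq> {..<n}"
  by (auto simp: P_def set_n_lists)

lemma goodL_iff: "goodL n xss \<longleftrightarrow> (\<forall>r\<in>set xss. length r = n \<and> distinct r \<and> set r \<subseteq> {..<n})
   \<and> (\<forall>j<n. distinct (map (\<lambda>r. r ! j) xss))"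
proof (induction xss)
  case Nil
  then show ?case by simp
next
  case (Cons r xss)
  show ?case
    unfolding goodL.simps Cons P_iff
    by (auto simp: list_all2_conv_all_nth)
qed

definition Mf :: "nat \<Rightarrow> (nat \<times> nat \<Rightarrow> nat) \<Rightarrow> nat list list" where
  "Mf n f = map (\<lambda>i. map (\<lambda>j. f (i, j)) [0..<n]) [0..<n]"

definition Lof :: "nat \<Rightarrow> nat list list \<Rightarrow> (nat \<times> nat \<Rightarrow> nat)" where
  "Lof n xss = restrict (\<lambda>(i, j). xss ! i ! j) ({..<n} \<times> {..<n})"

lemma Lat_list_bij: "bij_betw (Mf n) (Lat {..<n} {..<n} {..<n}) {xss. length xss = n \<and> goodL n xss}"
proof (rule bij_betw_byWitness[where f' = "Lof n"])
  show "\<forall>f\<in>Lat {..<n} {..<n} {..<n}. Lof n (Mf n f) = f"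
  proof
    fix f assume f: "f \<in> Lat {..<n} {..<n} {..<n}"
    show "Lof n (Mf n f) = f"
      by (rule extensionalityI[where A = "{..<n} \<times> {..<n}"])
         (use f in \<open>auto simp: Lat_def Lof_def Mf_def\<close>)
  qed
  show "\<forall>xss\<in>{xss. length xss = n \<and> goodL n xss}. Mf n (Lof n xss) = xss"
  proof
    fix xss assume xss: "xss \<in> {xss. length xss = n \<and> goodL n xss}"
    then have l: "length xss = n" "\<forall>i<n. length (xss ! i) = n"
      by (auto simp: goodL_iff)
    show "Mf n (Lof n xss) = xss"
      by (rule nth_equalityI) (auto simp: l Mf_def Lof_def intro: nth_equalityI)
  qed
  show "Mf n ` Lat {..<n} {..<n} {..<n} \<subseteq> {xss. length xss = n \<and> goodL n xss}"
  proof
    fix xss assume "xss \<in> Mf n ` Lat {..<n} {..<n} {..<n}"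
    then obtain f where f: "f \<in> Lat {..<n} {..<n} {..<n}" and xss: "xss = Mf n f" by auto
    have rows: "\<forall>i<n. inj_on (\<lambda>j. f (i, j)) {..<n} \<and> (\<forall>j<n. f (i, j) < n)"
      using f by (auto simp: Lat_def bij_betw_def)
    have cols: "\<forall>j<n. inj_on (\<lambda>i. f (i, j)) {..<n}"
      using f by (auto simp: Lat_def bij_betw_def)
    have e: "{0..<n} = {..<n}" by auto
    have "\<forall>r\<in>set xss. length r = n \<and> distinct r \<and> set r \<subseteq> {..<n}"
      using rows by (auto simp: xss Mf_def distinct_map e)
    moreover have "\<forall>j<n. distinct (map (\<lambda>r. r ! j) xss)"
      using cols by (auto simp: xss Mf_def distinct_map e comp_def)
    ultimately show "xss \<in> {xss. length xss = n \<and> goodL n xss}"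
      by (simp add: goodL_iff xss Mf_def)
  qed
  show "Lof n ` {xss. length xss = n \<and> goodL n xss} \<subseteq> Lat {..<n} {..<n} {..<n}"
  proof
    fix f assume "f \<in> Lof n ` {xss. length xss = n \<and> goodL n xss}"
    then obtain xss where xss: "length xss = n" "goodL n xss" and f: "f = Lof n xss" by auto
    have rows: "\<forall>r\<in>set xss. length r = n \<and> distinct r \<and> set r \<subseteq> {..<n}"
      and cols: "\<forall>j<n. distinct (map (\<lambda>r. r ! j) xss)" using xss by (auto simp: goodL_iff)
    have "\<forall>i\<in>{..<n}. bij_betw (\<lambda>j. f (i, j)) {..<n} {..<n}"
    proof
      fix i assume hi: "i \<in> {..<n}"
      then have r: "length (xss ! i) = n" "distinct (xss ! i)" "set (xss ! i) \<subseteq> {..<n}"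
        using rows xss by auto
      have "bij_betw (\<lambda>j. xss ! i ! j) {..<n} {..<n}"
      proof (rule bij_by_card)
        show "inj_on (\<lambda>j. xss ! i ! j) {..<n}" using r(1,2) by (auto simp: inj_on_def distinct_conv_nth)
        have "xss ! i ! j \<in> set (xss ! i)" if "j < n" for j using r(1) that by simp
        then show "(\<lambda>j. xss ! i ! j) ` {..<n} \<subseteq> {..<n}" using r(3) by blast
      qed auto
      then show "bij_betw (\<lambda>j. f (i, j)) {..<n} {..<n}"
        by (rule bij_betw_cong[THEN iffD1, rotated]) (use hi in \<open>auto simp: f Lof_def\<close>)
    qed
    moreover have "\<forall>j\<in>{..<n}. bij_betw (\<lambda>i. f (i, j)) {..<n} {..<n}"
    proof
      fix j assume hj: "j \<in> {..<n}"
      note j = hj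
      have d: "distinct (map (\<lambda>r. r ! j) xss)" using cols j by auto
      have "bij_betw (\<lambda>i. xss ! i ! j) {..<n} {..<n}"
      proof (rule bij_by_card)
        show "inj_on (\<lambda>i. xss ! i ! j) {..<n}" using d xss(1) by (auto simp: inj_on_def distinct_conv_nth)
        have "xss ! i ! j \<in> {..<n}" if "i < n" for i
        proof -
          have "xss ! i \<in> set xss" using that xss(1) by simp
          then have "length (xss ! i) = n" "set (xss ! i) \<subseteq> {..<n}" using rows by auto
          moreover then have "xss ! i ! j \<in> set (xss ! i)" using hj by simp
          ultimately show ?thesis by blast
        qed
        then show "(\<lambda>i. xss ! i ! j) ` {..<n} \<subseteq> {..<n}" by blast
      qed auto
      then show "bij_betw (\<lambda>i. f (i, j)) {..<n} {..<n}"
        by (rule bij_betw_cong[THEN iffD1, rotated]) (use hj in \<open>auto simp: f Lof_def\<close>)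
    qed
    ultimately show "f \<in> Lat {..<n} {..<n} {..<n}"
      by (auto simp: Lat_def f Lof_def)
  qed
qed

lemma card_Lat_gen: "card (Lat {..<n} {..<n} {..<n}) = length (gen n n)"
proof -
  have "card (Lat {..<n} {..<n} {..<n}) = card {xss. length xss = n \<and> goodL n xss}"
    using Lat_list_bij bij_betw_same_card by blast
  also have "\<dots> = length (gen n n)" using gen_props[of n n] distinct_card by metis
  finally show ?thesis .
qed

lemma N4: "card (Lat {..<4} {..<4} {..<4}) = 576"
  unfolding card_Lat_gen by code_simp
lemma N2: "card (Lat {..<2} {..<2} {..<2}) = 2"
  unfolding card_Lat_gen by code_simp
lemma N1: "card (Lat {..<1} {..<1} {..<1}) = 1"
  unfolding card_Lat_gen by code_simp

lemma Lat_partition: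
  fixes rho kap sig :: "nat \<Rightarrow> 'b::finite" and op :: "'b \<Rightarrow> 'b \<Rightarrow> 'b"
  assumes fin: "finite R" "finite C" "finite S"
    and cRS: "card R = card S" and cCS: "card C = card S"
    and inj1: "\<And>t. inj (op t)" and inj2: "\<And>t. inj (\<lambda>u. op u t)"
    and fibR: "\<And>t. card {i\<in>R. rho i = t} = n"
    and fibC: "\<And>t. card {j\<in>C. kap j = t} = n"
    and fibS: "\<And>t. card {s\<in>S. sig s = t} = n"
  shows "card {f \<in> Lat R C S. \<forall>i\<in>R. \<forall>j\<in>C. sig (f (i, j)) = op (rho i) (kap j)}
         = card (Lat {..<n} {..<n} {..<n}) ^ (card (UNIV :: 'b set) * card (UNIV :: 'b set))"
proof -
  define Rt where "Rt t = {i\<in>R. rho i = t}" for t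
  define Ct where "Ct t = {j\<in>C. kap j = t}" for t
  define St where "St t = {s\<in>S. sig s = t}" for t
  define A where "A = {f \<in> Lat R C S. \<forall>i\<in>R. \<forall>j\<in>C. sig (f (i, j)) = op (rho i) (kap j)}"
  define B where "B = Pi\<^sub>E UNIV (\<lambda>pq. Lat (Rt (fst pq)) (Ct (snd pq)) (St (op (fst pq) (snd pq))))"
  define Phi where "Phi f = (\<lambda>pq. restrict f (Rt (fst pq) \<times> Ct (snd pq)))" for f :: "nat \<times> nat \<Rightarrow> nat"
  define Psi where "Psi g = restrict (\<lambda>(i, j). g (rho i, kap j) (i, j)) (R \<times> C)"
    for g :: "'b \<times> 'b \<Rightarrow> nat \<times> nat \<Rightarrow> nat"
  have finS: "finite (St t)" for t using fin by (simp add: St_def)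
  have cRt: "card (Rt t) = n" for t using fibR by (simp add: Rt_def)
  have cCt: "card (Ct t) = n" for t using fibC by (simp add: Ct_def)
  have cSt: "card (St t) = n" for t using fibS by (simp add: St_def)
  have "bij_betw Phi A B"
  proof (rule bij_betw_byWitness[where f' = Psi])
    show "\<forall>f\<in>A. Psi (Phi f) = f"
    proof
      fix f assume f: "f \<in> A"
      show "Psi (Phi f) = f"
        by (rule extensionalityI[where A = "R \<times> C"])
           (use f in \<open>auto simp: A_def Lat_def Psi_def Phi_def Rt_def Ct_def\<close>)
    qed
    show "\<forall>g\<in>B. Phi (Psi g) = g"
    proof
      fix g assume g: "g \<in> B"
      show "Phi (Psi g) = g"
      proof
        fix pq :: "'b \<times> 'b"
        obtain p q where pq: "pq = (p, q)" by force
        have "g (p, q) \<in> Lat (Rt p) (Ct q) (St (op p q))"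
          using PiE_mem[OF g[unfolded B_def], of "(p, q)"] by simp
        then have ge: "g (p, q) \<in> extensional (Rt p \<times> Ct q)" by (simp add: Lat_def)
        show "Phi (Psi g) pq = g pq"
          by (rule extensionalityI[where A = "Rt p \<times> Ct q"])
            (use ge in \<open>auto simp: pq Phi_def Psi_def Rt_def Ct_def\<close>)
      qed
    qed
    show "Phi ` A \<subseteq> B"
    proof
      fix h assume "h \<in> Phi ` A"
      then obtain f where f: "f \<in> A" and h: "h = Phi f" by auto
      have fL: "f \<in> Lat R C S" and fc: "\<forall>i\<in>R. \<forall>j\<in>C. sig (f (i, j)) = op (rho i) (kap j)"
        using f by (auto simp: A_def)
      have "Phi f (p, q) \<in> Lat (Rt p) (Ct q) (St (op p q))" for p q
      proof -
        have "\<forall>i\<in>Rt p. bij_betw (\<lambda>j. Phi f (p, q) (i, j)) (Ct q) (St (op p q))"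
        proof
          fix i assume i: "i \<in> Rt p"
          have "bij_betw (\<lambda>j. f (i, j)) (Ct q) (St (op p q))"
          proof (rule bij_by_card[OF finS])
            have "bij_betw (\<lambda>j. f (i, j)) C S" using fL i by (auto simp: Lat_def Rt_def)
            then show "inj_on (\<lambda>j. f (i, j)) (Ct q)" "(\<lambda>j. f (i, j)) ` Ct q \<subseteq> St (op p q)"
              using fc i by (auto simp: bij_betw_def Ct_def St_def Rt_def intro: inj_on_subset)
            show "card (Ct q) = card (St (op p q))" by (simp add: cCt cSt)
          qed
          then show "bij_betw (\<lambda>j. Phi f (p, q) (i, j)) (Ct q) (St (op p q))"
            by (rule bij_betw_cong[THEN iffD1, rotated]) (use i in \<open>auto simp: Phi_def\<close>)
        qed
        moreover have "\<forall>j\<in>Ct q. bij_betw (\<lambda>i. Phi f (p, q) (i, j)) (Rt p) (St (op p q))"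
        proof
          fix j assume j: "j \<in> Ct q"
          have "bij_betw (\<lambda>i. f (i, j)) (Rt p) (St (op p q))"
          proof (rule bij_by_card[OF finS])
            have "bij_betw (\<lambda>i. f (i, j)) R S" using fL j by (auto simp: Lat_def Ct_def)
            then show "inj_on (\<lambda>i. f (i, j)) (Rt p)" "(\<lambda>i. f (i, j)) ` Rt p \<subseteq> St (op p q)"
              using fc j by (auto simp: bij_betw_def Ct_def St_def Rt_def intro: inj_on_subset)
            show "card (Rt p) = card (St (op p q))" by (simp add: cRt cSt)
          qed
          then show "bij_betw (\<lambda>i. Phi f (p, q) (i, j)) (Rt p) (St (op p q))"
            by (rule bij_betw_cong[THEN iffD1, rotated]) (use j in \<open>auto simp: Phi_def\<close>)
        qed
        ultimately show ?thesis by (simp add: Lat_def Phi_def)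
      qed
      then show "h \<in> B" by (auto simp: B_def h)
    qed
    show "Psi ` B \<subseteq> A"
    proof
      fix f assume "f \<in> Psi ` B"
      then obtain g where g: "g \<in> B" and f: "f = Psi g" by auto
      have gL: "g (p, q) \<in> Lat (Rt p) (Ct q) (St (op p q))" for p q
        using PiE_mem[OF g[unfolded B_def], of "(p, q)"] by simp
      have val: "f (i, j) \<in> St (op (rho i) (kap j))" if "i \<in> R" "j \<in> C" for i j
      proof -
        have "i \<in> Rt (rho i)" "j \<in> Ct (kap j)" using that by (auto simp: Rt_def Ct_def)
        then have "g (rho i, kap j) (i, j) \<in> St (op (rho i) (kap j))"
          using gL[of "rho i" "kap j"] by (auto simp: Lat_def bij_betw_def)
        then show ?thesis using that by (simp add: f Psi_def)
      qed
      have rows: "\<forall>i\<in>R. bij_betw (\<lambda>j. f (i, j)) C S"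
      proof
        fix i assume i: "i \<in> R"
        show "bij_betw (\<lambda>j. f (i, j)) C S"
        proof (rule bij_by_card)
          show "finite S" using fin by simp
          show "card C = card S" by (rule cCS)
          show "(\<lambda>j. f (i, j)) ` C \<subseteq> S" using val i by (auto simp: St_def)
          show "inj_on (\<lambda>j. f (i, j)) C"
          proof
            fix j j' assume j: "j \<in> C" and j': "j' \<in> C" and e: "f (i, j) = f (i, j')"
            have "op (rho i) (kap j) = op (rho i) (kap j')"
              using val[OF i j] val[OF i j'] e by (auto simp: St_def)
            then have k: "kap j = kap j'" using inj1 by (auto dest: injD)
            have ij: "i \<in> Rt (rho i)" "j \<in> Ct (kap j)" "j' \<in> Ct (kap j)"
              using i j j' k by (auto simp: Rt_def Ct_def)
            have "inj_on (\<lambda>x. g (rho i, kap j) (i, x)) (Ct (kap j))"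
              using gL[of "rho i" "kap j"] ij by (auto simp: Lat_def bij_betw_def)
            moreover have "g (rho i, kap j) (i, j) = g (rho i, kap j) (i, j')"
              using e i j j' k by (simp add: f Psi_def)
            ultimately show "j = j'" using ij by (auto dest: inj_onD)
          qed
        qed
      qed
      have cols: "\<forall>j\<in>C. bij_betw (\<lambda>i. f (i, j)) R S"
      proof
        fix j assume j: "j \<in> C"
        show "bij_betw (\<lambda>i. f (i, j)) R S"
        proof (rule bij_by_card)
          show "finite S" using fin by simp
          show "card R = card S" by (rule cRS)
          show "(\<lambda>i. f (i, j)) ` R \<subseteq> S" using val j by (auto simp: St_def)
          show "inj_on (\<lambda>i. f (i, j)) R"
          proof
            fix i i' assume i: "i \<in> R" and i': "i' \<in> R" and e: "f (i, j) = f (i', j)"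
            have "op (rho i) (kap j) = op (rho i') (kap j)"
              using val[OF i j] val[OF i' j] e by (auto simp: St_def)
            then have k: "rho i = rho i'" using inj2[of "kap j"] by (auto dest: injD)
            have ij: "i \<in> Rt (rho i)" "i' \<in> Rt (rho i)" "j \<in> Ct (kap j)"
              using i i' j k by (auto simp: Rt_def Ct_def)
            have "inj_on (\<lambda>x. g (rho i, kap j) (x, j)) (Rt (rho i))"
              using gL[of "rho i" "kap j"] ij by (auto simp: Lat_def bij_betw_def)
            moreover have "g (rho i, kap j) (i, j) = g (rho i, kap j) (i', j)"
              using e i i' j k by (simp add: f Psi_def)
            ultimately show "i = i'" using ij by (auto dest: inj_onD)
          qed
        qed
      qed
      have "f \<in> extensional (R \<times> C)" by (simp add: f Psi_def)
      moreover have "\<forall>i\<in>R. \<forall>j\<in>C. sig (f (i, j)) = op (rho i) (kap j)"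
        using val by (auto simp: St_def)
      ultimately show "f \<in> A" using rows cols by (simp add: A_def Lat_def)
    qed
  qed
  then have "card A = card B" by (rule bij_betw_same_card)
  also have "\<dots> = (\<Prod>pq\<in>(UNIV :: ('b \<times> 'b) set). card (Lat (Rt (fst pq)) (Ct (snd pq)) (St (op (fst pq) (snd pq)))))"
    by (simp add: B_def card_PiE)
  also have "\<dots> = (\<Prod>pq\<in>(UNIV :: ('b \<times> 'b) set). card (Lat {..<n} {..<n} {..<n}))"
  proof (rule prod.cong[OF refl])
    fix pq :: "'b \<times> 'b"
    show "card (Lat (Rt (fst pq)) (Ct (snd pq)) (St (op (fst pq) (snd pq)))) = card (Lat {..<n} {..<n} {..<n})"
      by (rule Lat_card_eq) (use fin cRt cCt cSt finS in \<open>auto simp: Rt_def Ct_def\<close>)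
  qed
  also have "\<dots> = card (Lat {..<n} {..<n} {..<n}) ^ (card (UNIV :: 'b set) * card (UNIV :: 'b set))"
    by (simp add: UNIV_Times_UNIV[symmetric] card_cartesian_product del: UNIV_Times_UNIV)
  finally show ?thesis by (simp add: A_def)
qed

definition graph :: "(nat \<times> nat \<Rightarrow> nat) \<Rightarrow> (nat \<times> nat \<times> nat) set" where
  "graph f = {(i, j, f (i, j)) | i j. i < 8 \<and> j < 8}"

abbreviation "D8 \<equiv> {..<(8::nat)}"

lemma graph_inj: "inj_on graph (Lat D8 D8 D8)"
proof
  fix f g assume f: "f \<in> Lat D8 D8 D8" and g: "g \<in> Lat D8 D8 D8" and e: "graph f = graph g"
  show "f = g"
  proof (rule extensionalityI[where A = "D8 \<times> D8"])
    show "f \<in> extensional (D8 \<times> D8)" "g \<in> extensional (D8 \<times> D8)" using f g by (auto simp: Lat_def)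
    fix p assume p: "p \<in> D8 \<times> D8"
    then obtain i j where ij: "p = (i, j)" "i < 8" "j < 8" by auto
    have "(i, j, f (i, j)) \<in> graph f" using ij unfolding graph_def by blast
    then have "(i, j, f (i, j)) \<in> graph g" using e by simp
    then obtain i' j' where "(i, j, f (i, j)) = (i', j', g (i', j'))" unfolding graph_def by blast
    then show "f p = g p" using ij by auto
  qed
qed

lemma latin_graph:
  "{L \<in> latin_codes. \<forall>c\<in>Ccode L. Q c}
   = graph ` {f \<in> Lat D8 D8 D8. \<forall>i<8. \<forall>j<8. Q (concat3 (phi i) (phi j) (phi (f (i, j))))}"
proof
  have e: "{0..<8} = D8" by auto
  show "{L \<in> latin_codes. \<forall>c\<in>Ccode L. Q c}
   \<subseteq> graph ` {f \<in> Lat D8 D8 D8. \<forall>i<8. \<forall>j<8. Q (concat3 (phi i) (phi j) (phi (f (i, j))))}"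
  proof
    fix L assume L: "L \<in> {L \<in> latin_codes. \<forall>c\<in>Ccode L. Q c}"
    then obtain a where a: "\<forall>i<8. \<forall>j<8. a i j < 8" "\<forall>i<8. inj_on (\<lambda>j. a i j) D8"
      "\<forall>j<8. inj_on (\<lambda>i. a i j) D8" and La: "L = {(i, j, a i j) | i j. i < 8 \<and> j < 8}"
      by (auto simp: latin_codes_def e)
    define f where "f = restrict (\<lambda>(i, j). a i j) (D8 \<times> D8)"
    have "\<forall>i\<in>D8. bij_betw (\<lambda>j. f (i, j)) D8 D8"
    proof
      fix i assume i: "i \<in> D8"
      have "bij_betw (\<lambda>j. a i j) D8 D8" by (rule bij_by_card) (use a i in auto)
      then show "bij_betw (\<lambda>j. f (i, j)) D8 D8"
        by (rule bij_betw_cong[THEN iffD1, rotated]) (use i in \<open>auto simp: f_def\<close>)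
    qed
    moreover have "\<forall>j\<in>D8. bij_betw (\<lambda>i. f (i, j)) D8 D8"
    proof
      fix j assume j: "j \<in> D8"
      have "bij_betw (\<lambda>i. a i j) D8 D8" by (rule bij_by_card) (use a j in auto)
      then show "bij_betw (\<lambda>i. f (i, j)) D8 D8"
        by (rule bij_betw_cong[THEN iffD1, rotated]) (use j in \<open>auto simp: f_def\<close>)
    qed
    ultimately have fL: "f \<in> Lat D8 D8 D8" by (simp add: Lat_def f_def)
    have gL: "graph f = L" by (auto simp: La graph_def f_def)
    have "\<forall>i<8. \<forall>j<8. Q (concat3 (phi i) (phi j) (phi (f (i, j))))"
    proof (intro allI impI)
      fix i j :: nat assume ij: "i < 8" "j < 8"
      have "(i, j, a i j) \<in> L" using ij La by auto
      then have "concat3 (phi i) (phi j) (phi (a i j)) \<in> Ccode L" by (force simp: Ccode_def)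
      then show "Q (concat3 (phi i) (phi j) (phi (f (i, j))))" using L ij by (auto simp: f_def)
    qed
    then show "L \<in> graph ` {f \<in> Lat D8 D8 D8. \<forall>i<8. \<forall>j<8. Q (concat3 (phi i) (phi j) (phi (f (i, j))))}"
      using fL gL by blast
  qed
  show "graph ` {f \<in> Lat D8 D8 D8. \<forall>i<8. \<forall>j<8. Q (concat3 (phi i) (phi j) (phi (f (i, j))))}
      \<subseteq> {L \<in> latin_codes. \<forall>c\<in>Ccode L. Q c}"
  proof
    fix L assume "L \<in> graph ` {f \<in> Lat D8 D8 D8. \<forall>i<8. \<forall>j<8. Q (concat3 (phi i) (phi j) (phi (f (i, j))))}"
    then obtain f where f: "f \<in> Lat D8 D8 D8" and fQ: "\<forall>i<8. \<forall>j<8. Q (concat3 (phi i) (phi j) (phi (f (i, j))))"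
      and L: "L = graph f" by auto
    have "L \<in> latin_codes"
      unfolding latin_codes_def
    proof (intro CollectI exI[where x = "\<lambda>i j. f (i, j)"] conjI)
      show "\<forall>i<8. \<forall>j<8. f (i, j) < 8" using f by (auto simp: Lat_def bij_betw_def)
      show "\<forall>i<8. inj_on (\<lambda>j. f (i, j)) {0..<8}" using f by (auto simp: Lat_def bij_betw_def e)
      show "\<forall>j<8. inj_on (\<lambda>i. f (i, j)) {0..<8}" using f by (auto simp: Lat_def bij_betw_def e)
      show "L = {(i, j, f (i, j)) |i j. i < 8 \<and> j < 8}" by (simp add: L graph_def)
    qed
    moreover have "\<forall>c\<in>Ccode L. Q c" using fQ by (auto simp: Ccode_def L graph_def)
    ultimately show "L \<in> {L \<in> latin_codes. \<forall>c\<in>Ccode L. Q c}" by simp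
  qed
qed

lemma LS_count:
  fixes rho kap sig :: "nat \<Rightarrow> 'b::finite" and op :: "'b \<Rightarrow> 'b \<Rightarrow> 'b"
  assumes inj1: "\<And>t. inj (op t)" and inj2: "\<And>t. inj (\<lambda>u. op u t)"
    and fibR: "\<And>t. card {i\<in>D8. rho i = t} = n"
    and fibC: "\<And>t. card {j\<in>D8. kap j = t} = n"
    and fibS: "\<And>t. card {s\<in>D8. sig s = t} = n"
    and hQ: "\<And>i j s. i < 8 \<Longrightarrow> j < 8 \<Longrightarrow> s < 8 \<Longrightarrow>
       Q (concat3 (phi i) (phi j) (phi s)) = (sig s = op (rho i) (kap j))"
  shows "card {L \<in> latin_codes. \<forall>c\<in>Ccode L. Q c}
     = card (Lat {..<n} {..<n} {..<n}) ^ (card (UNIV :: 'b set) * card (UNIV :: 'b set))"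
proof -
  have "{f \<in> Lat D8 D8 D8. \<forall>i<8. \<forall>j<8. Q (concat3 (phi i) (phi j) (phi (f (i, j))))}
      = {f \<in> Lat D8 D8 D8. \<forall>i\<in>D8. \<forall>j\<in>D8. sig (f (i, j)) = op (rho i) (kap j)}"
  proof -
    have "f (i, j) < 8" if "f \<in> Lat D8 D8 D8" "i < 8" "j < 8" for f i j
      using that by (auto simp: Lat_def bij_betw_def)
    then show ?thesis using hQ by auto
  qed
  then have "card {L \<in> latin_codes. \<forall>c\<in>Ccode L. Q c}
      = card {f \<in> Lat D8 D8 D8. \<forall>i\<in>D8. \<forall>j\<in>D8. sig (f (i, j)) = op (rho i) (kap j)}"
    unfolding latin_graph
    by (metis (no_types, lifting) card_image graph_inj inj_on_subset mem_Collect_eq subsetI)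
  also have "\<dots> = card (Lat {..<n} {..<n} {..<n}) ^ (card (UNIV :: 'b set) * card (UNIV :: 'b set))"
    by (rule Lat_partition[OF _ _ _ _ _ inj1 inj2 fibR fibC fibS]) auto
  finally show ?thesis .
qed

lemma word_support:
  assumes "i < 8" "j < 8" "s < 8"
  shows "(k < 24 \<and> concat3 (phi i) (phi j) (phi s) k) \<longleftrightarrow> (k = i \<or> k = 8 + j \<or> k = 16 + s)"
proof (cases "k < 8")
  case True then show ?thesis using assms by (simp add: concat3_def phi_def)
next
  case f1: False
  show ?thesis
  proof (cases "k < 16")
    case True then show ?thesis using assms f1 by (simp add: concat3_def phi_def) arith
  next
    case False then show ?thesis using assms f1 by (simp add: concat3_def phi_def) arith
  qed
qed

lemma orth_word:
  assumes "i < 8" "j < 8" "s < 8"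
  shows "orth 24 (concat3 (phi i) (phi j) (phi s)) v \<longleftrightarrow> (v (16 + s) = (v i \<noteq> v (8 + j)))"
proof -
  have e: "{k. k < 24 \<and> concat3 (phi i) (phi j) (phi s) k \<and> v k}
     = {k. (k = i \<or> k = 8 + j \<or> k = 16 + s) \<and> v k}"
    using word_support[OF assms] by blast
  also have "\<dots> = (if v i then {i} else {}) \<union> (if v (8 + j) then {8 + j} else {}) \<union> (if v (16 + s) then {16 + s} else {})"
    by auto
  finally have e2: "{k. k < 24 \<and> concat3 (phi i) (phi j) (phi s) k \<and> v k} = \<dots>" .
  have d: "i \<noteq> 8 + j" "i \<noteq> 16 + s" "8 + j \<noteq> 16 + s" using assms by auto
  show ?thesis
    unfolding orth_def e2 using d
    by (cases "v i"; cases "v (8 + j)"; cases "v (16 + s)") auto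
qed

lemma count_sum:
  fixes g :: "nat \<Rightarrow> 'b::finite"
  assumes "finite A"
  shows "card {p\<in>A. Q (g p)} = (\<Sum>t\<in>UNIV. if Q t then card {p\<in>A. g p = t} else 0)"
proof -
  have "{p\<in>A. Q (g p)} = (\<Union>t\<in>{t. Q t}. {p\<in>A. g p = t})" by auto
  moreover have "card (\<Union>t\<in>{t. Q t}. {p\<in>A. g p = t}) = (\<Sum>t\<in>{t. Q t}. card {p\<in>A. g p = t})"
    by (rule card_UN_disjoint) (use assms in auto)
  ultimately have "card {p\<in>A. Q (g p)} = (\<Sum>t\<in>{t. Q t}. card {p\<in>A. g p = t})" by simp
  also have "\<dots> = (\<Sum>t\<in>UNIV. if Q t then card {p\<in>A. g p = t} else 0)"
    by (simp add: sum.If_cases)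
  finally show ?thesis .
qed

lemma UNIV_b3: "(UNIV :: (bool \<times> bool \<times> bool) set) =
  {(True,True,True),(True,True,False),(True,False,True),(True,False,False),
   (False,True,True),(False,True,False),(False,False,True),(False,False,False)}"
  by auto

lemma sum_b3: "(\<Sum>t\<in>(UNIV :: (bool \<times> bool \<times> bool) set). h t) =
  h (True,True,True) + h (True,True,False) + h (True,False,True) + h (True,False,False) +
  h (False,True,True) + h (False,True,False) + h (False,False,True) + h (False,False,False)"
  unfolding UNIV_b3 by (simp add: add.assoc)

lemma block_fibers:
  fixes u v w :: "nat \<Rightarrow> bool"
  assumes wu: "wt 8 u = 4" and wv: "wt 8 v = 4" and ww: "wt 8 w = 4"
    and suv: "wt 8 (vadd u v) = 4" and suw: "wt 8 (vadd u w) = 4" and svw: "wt 8 (vadd v w) = 4"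
    and ind: "psi_indep3 u v w"
  shows "\<forall>t. card {p\<in>{..<8::nat}. (u p, v p, w p) = t} = 1"
proof -
  define g where "g p = (u p, v p, w p)" for p
  define n where "n t = card {p\<in>{..<8::nat}. g p = t}" for t
  have cs: "card {p\<in>{..<8::nat}. Q (g p)} = (\<Sum>t\<in>UNIV. if Q t then n t else 0)" for Q
    unfolding n_def by (rule count_sum) simp
  have wtc: "wt 8 h = card {p\<in>{..<8::nat}. h p}" for h
    unfolding wt_def by (rule arg_cong[where f = card]) auto
  have e0: "card {p\<in>{..<8::nat}. True} = 8" by simp
  have e1: "card {p\<in>{..<8::nat}. fst (g p)} = 4" using wu wtc by (simp add: g_def)
  have e2: "card {p\<in>{..<8::nat}. fst (snd (g p))} = 4" using wv wtc by (simp add: g_def)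
  have e3: "card {p\<in>{..<8::nat}. snd (snd (g p))} = 4" using ww wtc by (simp add: g_def)
  have e4: "card {p\<in>{..<8::nat}. fst (g p) \<noteq> fst (snd (g p))} = 4"
    using suv wtc[of "vadd u v"] by (simp add: g_def vadd_def)
  have e5: "card {p\<in>{..<8::nat}. fst (g p) \<noteq> snd (snd (g p))} = 4"
    using suw wtc[of "vadd u w"] by (simp add: g_def vadd_def)
  have e6: "card {p\<in>{..<8::nat}. fst (snd (g p)) \<noteq> snd (snd (g p))} = 4"
    using svw wtc[of "vadd v w"] by (simp add: g_def vadd_def)
  have i1: "\<not> (\<forall>p<8. \<not> (u p \<noteq> (v p \<noteq> w p)))" and i2: "\<not> (\<forall>p<8. (u p \<noteq> (v p \<noteq> w p)))"
  proof -
    have "let s = \<lambda>p. (True \<and> u p) \<noteq> ((True \<and> v p) \<noteq> (True \<and> w p)) in \<not> (\<forall>p<8. \<not> s p) \<and> \<not> (\<forall>p<8. s p)"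
      using ind unfolding psi_indep3_def by blast
    then show "\<not> (\<forall>p<8. \<not> (u p \<noteq> (v p \<noteq> w p)))" "\<not> (\<forall>p<8. (u p \<noteq> (v p \<noteq> w p)))"
      by (simp_all add: Let_def)
  qed
  have e7: "card {p\<in>{..<8::nat}. fst (g p) \<noteq> (fst (snd (g p)) \<noteq> snd (snd (g p)))} \<noteq> 0"
    using i1 by (auto simp: g_def)
  have e8: "card {p\<in>{..<8::nat}. \<not> (fst (g p) \<noteq> (fst (snd (g p)) \<noteq> snd (snd (g p))))} \<noteq> 0"
    using i2 by (auto simp: g_def)
  note facts' = e0[unfolded cs[of "\<lambda>t. True"] sum_b3, simplified]
    e1[unfolded cs[of "\<lambda>t. fst t"] sum_b3, simplified]
    e2[unfolded cs[of "\<lambda>t. fst (snd t)"] sum_b3, simplified]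
    e3[unfolded cs[of "\<lambda>t. snd (snd t)"] sum_b3, simplified]
    e4[unfolded cs[of "\<lambda>t. fst t \<noteq> fst (snd t)"] sum_b3, simplified]
    e5[unfolded cs[of "\<lambda>t. fst t \<noteq> snd (snd t)"] sum_b3, simplified]
    e6[unfolded cs[of "\<lambda>t. fst (snd t) \<noteq> snd (snd t)"] sum_b3, simplified]
    e7[unfolded cs[of "\<lambda>t. fst t \<noteq> (fst (snd t) \<noteq> snd (snd t))"] sum_b3, simplified]
    e8[unfolded cs[of "\<lambda>t. \<not> (fst t \<noteq> (fst (snd t) \<noteq> snd (snd t)))"] sum_b3, simplified]
  have "n (True,True,True) = 1 \<and> n (True,True,False) = 1 \<and> n (True,False,True) = 1 \<and> n (True,False,False) = 1 \<and>
    n (False,True,True) = 1 \<and> n (False,True,False) = 1 \<and> n (False,False,True) = 1 \<and> n (False,False,False) = 1"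
  proof -
    have "n (True,True,True) \<le> 4" using facts' by linarith
    then have "n (True,True,True) = 0 \<or> n (True,True,True) = 1 \<or> n (True,True,True) = 2 \<or>
      n (True,True,True) = 3 \<or> n (True,True,True) = 4" by linarith
    then show ?thesis using facts' by (elim disjE) linarith+
  qed
  then have "\<forall>t. n t = 1" by (metis (full_types) prod_cases3)
  then show ?thesis by (simp add: n_def g_def)
qed

lemma fib_derive:
  fixes u v w :: "nat \<Rightarrow> bool"
  assumes h: "\<forall>t. card {p\<in>{..<8::nat}. (u p, v p, w p) = t} = 1"
  shows "\<And>a. card {p\<in>{..<8::nat}. u p = a} = 4" "\<And>a. card {p\<in>{..<8::nat}. v p = a} = 4"
    "\<And>a. card {p\<in>{..<8::nat}. w p = a} = 4" "\<And>t. card {p\<in>{..<8::nat}. (u p, v p) = t} = 2"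
proof -
  define g where "g p = (u p, v p, w p)" for p
  have n1: "card {p\<in>{..<8::nat}. g p = t} = 1" for t unfolding g_def using h by blast
  have cs: "card {p\<in>{..<8::nat}. Q (g p)} = (\<Sum>t\<in>UNIV. if Q t then 1 else 0)" for Q
  proof -
    have "(\<Sum>t\<in>UNIV. if Q t then card {p\<in>{..<8::nat}. g p = t} else 0) = (\<Sum>t\<in>UNIV. if Q t then 1 else 0)"
      by (intro sum.cong refl) (simp only: n1)
    then show ?thesis using count_sum[of "{..<8::nat}" Q g] by simp
  qed
  fix a :: bool and t :: "bool \<times> bool"
  show "card {p\<in>{..<8::nat}. u p = a} = 4"
    using cs[of "\<lambda>t. fst t = a"] by (cases a) (simp_all add: sum_b3 g_def)
  show "card {p\<in>{..<8::nat}. v p = a} = 4"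
    using cs[of "\<lambda>t. fst (snd t) = a"] by (cases a) (simp_all add: sum_b3 g_def)
  show "card {p\<in>{..<8::nat}. w p = a} = 4"
    using cs[of "\<lambda>t. snd (snd t) = a"] by (cases a) (simp_all add: sum_b3 g_def)
  obtain a1 a2 where t: "t = (a1, a2)" by force
  show "card {p\<in>{..<8::nat}. (u p, v p) = t} = 2"
    using cs[of "\<lambda>t'. (fst t', fst (snd t')) = t"] unfolding t
    by (cases a1; cases a2) (simp_all add: sum_b3 g_def)
qed

lemma Ccode_word:
  assumes hL: "L \<in> latin_codes" and hc: "c \<in> Ccode L"
  shows "\<exists>i j s. i < 8 \<and> j < 8 \<and> s < 8 \<and> c = concat3 (phi i) (phi j) (phi s)"
proof -
  obtain a where a: "\<forall>i<8. \<forall>j<8. a i j < 8" and La: "L = {(i, j, a i j) | i j. i < 8 \<and> j < 8}"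
    using hL unfolding latin_codes_def by auto
  obtain t where t: "t \<in> L" and ct: "c = (\<lambda>(i, j, s). concat3 (phi i) (phi j) (phi s)) t"
    using hc unfolding Ccode_def by auto
  obtain i j where ij: "i < 8" "j < 8" "t = (i, j, a i j)" using t La by auto
  have "a i j < 8" using a ij by auto
  moreover have "c = concat3 (phi i) (phi j) (phi (a i j))" using ct ij by simp
  ultimately show ?thesis using ij by blast
qed

lemma card_bool2: "card (UNIV :: (bool \<times> bool) set) = 4"
  by (simp add: UNIV_Times_UNIV[symmetric] card_cartesian_product del: UNIV_Times_UNIV)
lemma card_bool3: "card (UNIV :: (bool \<times> bool \<times> bool) set) = 8"
  by (simp add: UNIV_Times_UNIV[symmetric] card_cartesian_product del: UNIV_Times_UNIV)

theorem lemma2: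
  fixes x y z :: bvec
  assumes len: "\<forall>k\<ge>24. \<not> x k" "\<forall>k\<ge>24. \<not> y k" "\<forall>k\<ge>24. \<not> z k"
    and orth: "orth 24 x y" "orth 24 x z" "orth 24 y z"
    and wts: "\<forall>i<3. wt 8 (block x i) = 4 \<and> wt 8 (block y i) = 4 \<and> wt 8 (block z i) = 4"
    and indep: "\<forall>i<3. psi_indep3 (block x i) (block y i) (block z i)"
    and sums: "\<forall>i<3. wt 8 (vadd (block x i) (block y i)) = 4 \<and>
                     wt 8 (vadd (block x i) (block z i)) = 4 \<and>
                     wt 8 (vadd (block y i) (block z i)) = 4"
  shows "(card (LS x) = 576 ^ 4 \<and> card (LS y) = 576 ^ 4 \<and> card (LS z) = 576 ^ 4)
       \<and> (card (LS2 x y) = 16 ^ 4 \<and> LS2 x y = LS2 x (vadd x y) \<and> LS2 x y = LS2 (vadd x y) y)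
       \<and> card (LS3 x y z) = 1"
proof -
  have fb: "\<forall>t. card {p\<in>{..<8::nat}. (block x k p, block y k p, block z k p) = t} = 1" if "k < 3" for k
  proof -
    have w: "wt 8 (block x k) = 4" "wt 8 (block y k) = 4" "wt 8 (block z k) = 4"
      using wts that by auto
    have s: "wt 8 (vadd (block x k) (block y k)) = 4" "wt 8 (vadd (block x k) (block z k)) = 4"
      "wt 8 (vadd (block y k) (block z k)) = 4" using sums that by auto
    have i: "psi_indep3 (block x k) (block y k) (block z k)" using indep that by auto
    show ?thesis by (rule block_fibers[OF w s i])
  qed
  have fb0: "\<forall>t. card {p\<in>{..<8::nat}. (block x 0 p, block y 0 p, block z 0 p) = t} = 1" by (rule fb) simp
  have fb1: "\<forall>t. card {p\<in>{..<8::nat}. (block x 1 p, block y 1 p, block z 1 p) = t} = 1" by (rule fb) simp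
  have fb2: "\<forall>t. card {p\<in>{..<8::nat}. (block x 2 p, block y 2 p, block z 2 p) = t} = 1" by (rule fb) simp
  note d0 = fib_derive[OF fb0] and d1 = fib_derive[OF fb1] and d2 = fib_derive[OF fb2]
  have bw: "orth 24 (concat3 (phi i) (phi j) (phi s)) v \<longleftrightarrow>
      (block v 2 s = (block v 0 i \<noteq> block v 1 j))" if "i < 8" "j < 8" "s < 8" for i j s v
    using orth_word[OF that] that by (simp add: block_def)
  have injb1: "inj ((\<noteq>) t)" for t :: bool by (auto simp: inj_on_def)
  have injb2: "inj (\<lambda>u. u \<noteq> t)" for t :: bool by (auto simp: inj_on_def)
  have cLS: "card (LS v) = 576 ^ 4"
    if f0: "\<And>a. card {p\<in>{..<8::nat}. block v 0 p = a} = 4"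
    and f1: "\<And>a. card {p\<in>{..<8::nat}. block v 1 p = a} = 4"
    and f2: "\<And>a. card {p\<in>{..<8::nat}. block v 2 p = a} = 4" for v
  proof -
    have "card (LS v) = card (Lat {..<4} {..<4} {..<4}) ^ (card (UNIV :: bool set) * card (UNIV :: bool set))"
      unfolding LS_def
      by (rule LS_count[where rho = "block v 0" and kap = "block v 1" and sig = "block v 2" and op = "(\<noteq>)",
            OF injb1 injb2 f0 f1 f2]) (simp add: bw)
    then show ?thesis by (simp add: N4)
  qed
  have a: "card (LS x) = 576 ^ 4 \<and> card (LS y) = 576 ^ 4 \<and> card (LS z) = 576 ^ 4"
    using cLS[OF d0(1) d1(1) d2(1)] cLS[OF d0(2) d1(2) d2(2)] cLS[OF d0(3) d1(3) d2(3)] by simp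
  define op2 where "op2 p q = (fst p \<noteq> fst q, snd p \<noteq> (snd q :: bool))" for p q :: "bool \<times> bool"
  have inj21: "inj (op2 t)" for t by (auto simp: inj_on_def op2_def prod_eq_iff)
  have inj22: "inj (\<lambda>u. op2 u t)" for t by (auto simp: inj_on_def op2_def prod_eq_iff)
  have LS2e: "LS2 x y = {L \<in> latin_codes. \<forall>c\<in>Ccode L. orth 24 c x \<and> orth 24 c y}"
    by (auto simp: LS2_def LS_def)
  have "card (LS2 x y) = card (Lat {..<2} {..<2} {..<2}) ^ (card (UNIV :: (bool \<times> bool) set) * card (UNIV :: (bool \<times> bool) set))"
    unfolding LS2e
    by (rule LS_count[where rho = "\<lambda>p. (block x 0 p, block y 0 p)" and kap = "\<lambda>p. (block x 1 p, block y 1 p)"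
          and sig = "\<lambda>p. (block x 2 p, block y 2 p)" and op = op2, OF inj21 inj22 d0(4) d1(4) d2(4)])
       (simp_all add: bw op2_def)
  then have b1: "card (LS2 x y) = 16 ^ 4" by (simp add: N2 card_bool2)
  have lin: "orth 24 c x \<and> orth 24 c y \<longleftrightarrow> orth 24 c x \<and> orth 24 c (vadd x y)"
    "orth 24 c x \<and> orth 24 c y \<longleftrightarrow> orth 24 c (vadd x y) \<and> orth 24 c y"
    if hL: "L \<in> latin_codes" and hc: "c \<in> Ccode L" for L c
  proof -
    obtain i j s where ijs: "i < 8" "j < 8" "s < 8" "c = concat3 (phi i) (phi j) (phi s)"
      using Ccode_word[OF hL hc] by blast
    show "orth 24 c x \<and> orth 24 c y \<longleftrightarrow> orth 24 c x \<and> orth 24 c (vadd x y)"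
      "orth 24 c x \<and> orth 24 c y \<longleftrightarrow> orth 24 c (vadd x y) \<and> orth 24 c y"
      unfolding ijs(4) orth_word[OF ijs(1-3)] by (auto simp: vadd_def)
  qed
  have LS2g: "LS2 u w = {L \<in> latin_codes. \<forall>c\<in>Ccode L. orth 24 c u \<and> orth 24 c w}" for u w
    by (auto simp: LS2_def LS_def)
  have b2: "LS2 x y = LS2 x (vadd x y)" "LS2 x y = LS2 (vadd x y) y"
    unfolding LS2g
  proof (rule_tac [!] Collect_cong)
    fix L
    show "(L \<in> latin_codes \<and> (\<forall>c\<in>Ccode L. orth 24 c x \<and> orth 24 c y)) =
          (L \<in> latin_codes \<and> (\<forall>c\<in>Ccode L. orth 24 c x \<and> orth 24 c (vadd x y)))"
      using lin(1)[of L] by blast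
    show "(L \<in> latin_codes \<and> (\<forall>c\<in>Ccode L. orth 24 c x \<and> orth 24 c y)) =
          (L \<in> latin_codes \<and> (\<forall>c\<in>Ccode L. orth 24 c (vadd x y) \<and> orth 24 c y))"
      using lin(2)[of L] by blast
  qed
  define op3 where "op3 p q = (fst p \<noteq> fst q, fst (snd p) \<noteq> fst (snd q), snd (snd p) \<noteq> (snd (snd q) :: bool))"
    for p q :: "bool \<times> bool \<times> bool"
  have inj31: "inj (op3 t)" for t by (auto simp: inj_on_def op3_def prod_eq_iff)
  have inj32: "inj (\<lambda>u. op3 u t)" for t by (auto simp: inj_on_def op3_def prod_eq_iff)
  have LS3e: "LS3 x y z = {L \<in> latin_codes. \<forall>c\<in>Ccode L. orth 24 c x \<and> orth 24 c y \<and> orth 24 c z}"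
    by (auto simp: LS3_def LS_def)
  have "card (LS3 x y z) = card (Lat {..<1} {..<1} {..<1}) ^ (card (UNIV :: (bool \<times> bool \<times> bool) set) * card (UNIV :: (bool \<times> bool \<times> bool) set))"
    unfolding LS3e
    by (rule LS_count[where rho = "\<lambda>p. (block x 0 p, block y 0 p, block z 0 p)"
          and kap = "\<lambda>p. (block x 1 p, block y 1 p, block z 1 p)"
          and sig = "\<lambda>p. (block x 2 p, block y 2 p, block z 2 p)" and op = op3,
          OF inj31 inj32 fb0[rule_format] fb1[rule_format] fb2[rule_format]])
       (simp_all add: bw op3_def)
  then have "card (LS3 x y z) = 1 ^ (card (UNIV :: (bool \<times> bool \<times> bool) set) * card (UNIV :: (bool \<times> bool \<times> bool) set))"
    by (simp only: N1)
  then have c: "card (LS3 x y z) = 1" by simp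
  show ?thesis using a b1 b2 c by blast
qed

end
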